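(* Let $c\in\mathbb{R}$ and let $\gamma:(c,\infty)\to\mathbb{R}$ be a three times differentiable function such that $$\gamma\ge0,\quad\gamma'\le0,\quad\gamma''\ge0,\quad\gamma'''\le0$$ on $(c,\infty)$. Then the function $f:(-e^{-c},e^{-c})^2\to\mathbb{R}$ given by $$f(x,y)=\begin{cases} -\gamma(\log\frac1x)\cdot(2y-x)-\gamma'(\log\frac1x)\cdot\frac{1}{2x}(x-y)(2x-y), & e^{-c}>x\ge|y|,\ x\ne0,\\ -\gamma(\log(-\frac1x))\cdot(2x-y)-\gamma'(\log(-\frac1x))\cdot\frac32(y-x), & -e^{-c}<x\le-|y|,\ x\ne0,\\ 0, & x=y=0,\\ f(y,x), & \text{in the remaining cases (i.e. } |y|>|x|), \end{cases}$$ is separately convex.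
   Context: A function $f$ defined on an open set $U\subset\mathbb{R}^2$ is called separately convex if it is convex on every line segment contained in $U$ that is parallel to a coordinate axis. *)

theory Defs
  imports "HOL-Analysis.Analysis"
begin

definition separately_convex_on :: "(real \<times> real) set \<Rightarrow> (real \<times> real \<Rightarrow> real) \<Rightarrow> bool" where
  "separately_convex_on U f \<longleftrightarrow>
     (\<forall>a b. closed_segment a b \<subseteq> U \<and> (fst a = fst b \<or> snd a = snd b)
            \<longrightarrow> convex_on (closed_segment a b) f)"

text \<open>The first three cases of the definition of f (with g1 the derivative of g).\<close>
definition f_base :: "(real \<Rightarrow> real) \<Rightarrow> (real \<Rightarrow> real) \<Rightarrow> real \<times> real \<Rightarrow> real" where
  "f_base g g1 p = (let x = fst p; y = snd p in
     if x \<noteq> 0 \<and> x \<ge> \<bar>y\<bar> then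
        - g (ln (1/x)) * (2*y - x) - g1 (ln (1/x)) * (1/(2*x)) * (x - y) * (2*x - y)
     else if x \<noteq> 0 \<and> x \<le> - \<bar>y\<bar> then
        - g (ln (-(1/x))) * (2*x - y) - g1 (ln (-(1/x))) * (3/2) * (y - x)
     else 0)"

definition f_sep :: "(real \<Rightarrow> real) \<Rightarrow> (real \<Rightarrow> real) \<Rightarrow> real \<times> real \<Rightarrow> real" where
  "f_sep g g1 p = (if \<bar>snd p\<bar> > \<bar>fst p\<bar> then f_base g g1 (snd p, fst p) else f_base g g1 p)"

end

theory Submission
  imports Defs
begin


lemma convex_on_cong':
  assumes "convex_on S f" "\<And>x. x \<in> S \<Longrightarrow> f x = g x"
  shows "convex_on S g"
proof (rule convex_onI)
  show cS: "convex S" using assms(1) convex_on_imp_convex by blast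
  fix t :: real and x y assume t: "0 < t" "t < 1" and x: "x \<in> S" and y: "y \<in> S"
  have "(1 - t) *\<^sub>R x + t *\<^sub>R y \<in> S" using cS x y t by (simp add: convexD)
  then show "g ((1 - t) *\<^sub>R x + t *\<^sub>R y) \<le> (1 - t) * g x + t * g y"
    using convex_onD[OF assms(1), of t x y] t x y assms(2) by simp
qed

lemma glue_sub:
  fixes f :: "real \<Rightarrow> real" and I :: "real set"
  assumes I: "convex I" and q: "q \<in> I"
    and L: "convex_on (I \<inter> {..q}) f" and R: "convex_on (I \<inter> {q..}) f"
    and sub: "\<And>x. x \<in> I \<Longrightarrow> f q + m * (x - q) \<le> f x"
  shows "convex_on I f"
proof (rule convex_on_linorderI[OF _ I])
  fix t x y :: real assume t: "0<t" "t<1" and x: "x\<in>I" and y: "y\<in>I" and xy: "x<y"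
  define w where "w = (1-t)*x + t*y"
  have wx: "w - x = t*(y-x)" unfolding w_def by (simp add: algebra_simps)
  have yw: "y - w = (1-t)*(y-x)" unfolding w_def by (simp add: algebra_simps)
  have xw: "x < w" using wx t xy by (smt (verit) mult_pos_pos)
  have wy: "w < y" using yw t xy by (smt (verit) mult_pos_pos)
  have "f w \<le> (1 - t) * f x + t * f y"
  proof (cases "y \<le> q")
    case True
    then show ?thesis using convex_onD[OF L, of t x y] x y xy t by (auto simp: w_def)
  next
    case yq: False
    show ?thesis
    proof (cases "q \<le> x")
      case True
      then show ?thesis using convex_onD[OF R, of t x y] x y xy t by (auto simp: w_def)
    next
      case xq: False
      have gx: "f q + m * (x - q) \<le> f x" using sub x .
      have gy: "f q + m * (y - q) \<le> f y" using sub y .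
      show ?thesis
      proof (cases "w \<le> q")
        case True
        define s where "s = (w-x)/(q-x)"
        have s01: "0 \<le> s" "s \<le> 1" using True xq xw unfolding s_def
          by (auto simp: field_simps)
        have sq: "s*(q-x) = w - x" using xq unfolding s_def by simp
        have ws: "w = (1-s)*x + s*q" using sq by (simp add: algebra_simps)
        have ts: "t \<le> s"
        proof -
          have e: "t*(y-x) = s*(q-x)" using sq wx by simp
          have "s*(q-x) \<le> s*(y-x)" using s01 yq by (intro mult_left_mono) auto
          hence "t*(y-x) \<le> s*(y-x)" using e by simp
          thus ?thesis using xy by (simp add: mult_le_cancel_right)
        qed
        have "f w \<le> (1-s) * f x + s * f q"
          using convex_onD[OF L, of s x q] s01 x q xq by (simp add: ws)
        also have "\<dots> \<le> (1 - t) * f x + t * f y"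
        proof -
          have e: "(1-s) * f x + s * f q - ((1 - t) * f x + t * f y)
              = (t-s)*(f x - f q - m*(x-q)) - t*(f y - f q - m*(y-q))
                + m*((t-s)*(x-q) - t*(y-q))" by (simp add: algebra_simps)
          have z: "(t-s)*(x-q) - t*(y-q) = 0" using sq wx by (simp add: algebra_simps)
          have "(t-s)*(f x - f q - m*(x-q)) \<le> 0" using ts gx
            by (simp add: mult_nonpos_nonneg)
          moreover have "t*(f y - f q - m*(y-q)) \<ge> 0" using t gy by simp
          moreover have "m*((t-s)*(x-q) - t*(y-q)) = 0" using z by simp
          ultimately show ?thesis using e by linarith
        qed
        finally show ?thesis .
      next
        case False
        define s where "s = (w-q)/(y-q)"
        have s01: "0 \<le> s" "s \<le> 1" using False yq wy unfolding s_def
          by (auto simp: field_simps)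
        have sq0: "s*(y-q) = w - q" using yq unfolding s_def by simp
        have ws: "w = (1-s)*q + s*y" using sq0 by (simp add: algebra_simps)
        have sq: "(1-s)*(y-q) = y - w" using sq0 by (simp add: algebra_simps)
        have ts: "1 - t \<le> 1 - s"
        proof -
          have e: "(1-t)*(y-x) = (1-s)*(y-q)" using sq yw by simp
          have "(1-s)*(y-q) \<le> (1-s)*(y-x)" using s01 xq by (intro mult_left_mono) auto
          hence "(1-t)*(y-x) \<le> (1-s)*(y-x)" using e by simp
          thus ?thesis using xy by (simp add: mult_le_cancel_right)
        qed
        have "f w \<le> (1-s) * f q + s * f y"
          using convex_onD[OF R, of s q y] s01 y q yq by (simp add: ws)
        also have "\<dots> \<le> (1 - t) * f x + t * f y"
        proof -
          have e: "(1-s) * f q + s * f y - ((1 - t) * f x + t * f y)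
              = ((1-t) - (1-s))*(f y - f q - m*(y-q)) - (1-t)*(f x - f q - m*(x-q))
                + m*(((1-t)-(1-s))*(y-q) - (1-t)*(x-q))" by (simp add: algebra_simps)
          have z: "((1-t)-(1-s))*(y-q) - (1-t)*(x-q) = 0" using sq yw by (simp add: algebra_simps)
          have "((1-t)-(1-s))*(f y - f q - m*(y-q)) \<le> 0" using ts gy
            by (simp add: mult_nonpos_nonneg)
          moreover have "(1-t)*(f x - f q - m*(x-q)) \<ge> 0" using t gx by simp
          moreover have "m*(((1-t)-(1-s))*(y-q) - (1-t)*(x-q)) = 0" using z by simp
          ultimately show ?thesis using e by linarith
        qed
        finally show ?thesis .
      qed
    qed
  qed
  then show "f ((1 - t) *\<^sub>R x + t *\<^sub>R y) \<le> (1 - t) * f x + t * f y" by (simp add: w_def)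
qed

lemma tangent_right:
  fixes f :: "real \<Rightarrow> real"
  assumes cv: "convex_on {q..x} f" and qx: "q < x"
    and d: "(f has_real_derivative d) (at q within {q..x})"
  shows "f q + d * (x - q) \<le> f x"
proof -
  have lim: "((\<lambda>y. (f y - f q) / (y - q)) \<longlongrightarrow> d) (at_right q)"
    using d qx unfolding has_field_derivative_iff by (simp add: at_within_Icc_at_right)
  have ev: "eventually (\<lambda>y. (f y - f q) / (y - q) \<le> (f x - f q) / (x - q)) (at_right q)"
    using eventually_at_right_real[OF qx]
  proof eventually_elim
    fix y assume y: "y \<in> {q<..<x}"
    have "f y \<le> (f x - f q) / (x - q) * (y - q) + f q"
      using convex_onD_Icc'[OF cv, of y] y by simp
    thus "(f y - f q) / (y - q) \<le> (f x - f q) / (x - q)" using y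
      by (simp add: field_split_simps)
  qed
  have "d \<le> (f x - f q) / (x - q)"
    by (rule tendsto_upperbound[OF lim ev]) simp
  thus ?thesis using qx by (simp add: field_simps)
qed

lemma tangent_left:
  fixes f :: "real \<Rightarrow> real"
  assumes cv: "convex_on {x..q} f" and qx: "x < q"
    and d: "(f has_real_derivative d) (at q within {x..q})"
  shows "f q + d * (x - q) \<le> f x"
proof -
  have lim: "((\<lambda>y. (f y - f q) / (y - q)) \<longlongrightarrow> d) (at_left q)"
    using d qx unfolding has_field_derivative_iff by (simp add: at_within_Icc_at_left)
  have ev: "eventually (\<lambda>y. (f y - f q) / (y - q) \<ge> (f x - f q) / (x - q)) (at_left q)"
    using eventually_at_left_real[OF qx]
  proof eventually_elim
    fix y assume y: "y \<in> {x<..<q}"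
    have "f y \<le> (f x - f q) / (q - x) * (q - y) + f q"
      using convex_onD_Icc''[OF cv, of y] y by simp
    hence "f y - f q \<le> (f x - f q) * ((q - y) / (q - x))" by simp
    also have "(q - y) / (q - x) = (y - q) / (x - q)" using y qx by (simp add: field_simps)
    finally show "(f y - f q) / (y - q) \<ge> (f x - f q) / (x - q)" using y qx
      by (simp add: field_split_simps)
  qed
  have "d \<ge> (f x - f q) / (x - q)"
    by (rule tendsto_lowerbound[OF lim ev]) simp
  thus ?thesis using qx by (simp add: field_simps)
qed

lemma glue_deriv:
  fixes f :: "real \<Rightarrow> real" and I :: "real set"
  assumes I: "convex I" and q: "q \<in> I"
    and L: "convex_on (I \<inter> {..q}) f" and R: "convex_on (I \<inter> {q..}) f"
    and dL: "(f has_real_derivative dl) (at q within I \<inter> {..q})"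
    and dR: "(f has_real_derivative dr) (at q within I \<inter> {q..})"
    and le: "dl \<le> dr"
  shows "convex_on I f"
proof (rule glue_sub[OF I q L R])
  fix x assume x: "x \<in> I"
  have con: "connected I" using I convex_connected by blast
  consider "x = q" | "q < x" | "x < q" by linarith
  then show "f q + dr * (x - q) \<le> f x"
  proof cases
    case 2
    have sub: "{q..x} \<subseteq> I \<inter> {q..}" using connected_contains_Icc[OF con q x] by auto
    show ?thesis
      by (rule tangent_right[OF convex_on_subset[OF R sub] 2 DERIV_subset[OF dR sub]]) simp
  next
    case 3
    have sub: "{x..q} \<subseteq> I \<inter> {..q}" using connected_contains_Icc[OF con x q] by auto
    have "f q + dl * (x - q) \<le> f x"
      by (rule tangent_left[OF convex_on_subset[OF L sub] 3 DERIV_subset[OF dL sub]]) simp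
    moreover have "dr * (x - q) \<le> dl * (x - q)" using le 3 by (simp add: mult_right_mono_neg)
    ultimately show ?thesis by linarith
  qed simp
qed


lemma dl: "0 < (y::real) \<Longrightarrow> ((\<lambda>y. ln (1/y)) has_real_derivative (-1/y)) (at y)"
proof -
  assume y: "0 < y"
  have "((\<lambda>y. - ln y) has_real_derivative (-1/y)) (at y)"
    using DERIV_ln[OF y] DERIV_minus by (metis divide_minus_left inverse_eq_divide)
  then show ?thesis
    by (rule has_field_derivative_transform_within_open[where S="{0<..}"]) (use y in \<open>auto simp: ln_div\<close>)
qed
lemma lnneg_eq: "(x::real) < 0 \<Longrightarrow> ln(-(1/x)) = - ln(-x)"
  using ln_div[of 1 "-x"] by simp
lemma dl2: "(y::real) < 0 \<Longrightarrow> ((\<lambda>y. ln (-(1/y))) has_real_derivative (-1/y)) (at y)"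
proof -
  assume y: "y < 0"
  have "((\<lambda>y. ln (-y)) has_real_derivative (1/y)) (at y)"
    using y by (auto intro!: derivative_eq_intros)
  hence "((\<lambda>y. - ln (-y)) has_real_derivative (-1/y)) (at y)"
    using DERIV_minus by fastforce
  then show ?thesis
    by (rule has_field_derivative_transform_within_open[where S="{..<0}"]) (use y in \<open>auto simp: lnneg_eq\<close>)
qed
lemma ratio_right:
  fixes h :: "real \<Rightarrow> real"
  assumes cv: "convex_on {0<..<r} h" and h0: "h 0 = 0"
    and rt: "\<And>z t. 0<z \<Longrightarrow> z<r \<Longrightarrow> 0<t \<Longrightarrow> t<1 \<Longrightarrow> h(t*z) \<le> t * h z"
  shows "convex_on {0..<r} h"
proof (rule convex_on_linorderI)
  show "convex {0..<r}" by simp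
  fix t x y :: real assume t: "0<t" "t<1" and x: "x \<in> {0..<r}" and y: "y \<in> {0..<r}" and xy: "x<y"
  show "h ((1 - t) *\<^sub>R x + t *\<^sub>R y) \<le> (1 - t) * h x + t * h y"
  proof (cases "x = 0")
    case True
    then show ?thesis using rt[of y t] t y xy h0 by simp
  next
    case False
    then show ?thesis using convex_onD[OF cv, of t x y] t x y xy by simp
  qed
qed

lemma ratio_left:
  fixes h :: "real \<Rightarrow> real"
  assumes cv: "convex_on {-r<..<0} h" and h0: "h 0 = 0"
    and rt: "\<And>z t. -r<z \<Longrightarrow> z<0 \<Longrightarrow> 0<t \<Longrightarrow> t<1 \<Longrightarrow> h(t*z) \<le> t * h z"
  shows "convex_on {-r<..0} h"
proof (rule convex_on_linorderI)
  show "convex {-r<..0}" by simp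
  fix t x y :: real assume t: "0<t" "t<1" and x: "x \<in> {-r<..0}" and y: "y \<in> {-r<..0}" and xy: "x<y"
  show "h ((1 - t) *\<^sub>R x + t *\<^sub>R y) \<le> (1 - t) * h x + t * h y"
  proof (cases "y = 0")
    case True
    then show ?thesis using rt[of x "1-t"] t x xy h0 by simp
  next
    case False
    then show ?thesis using convex_onD[OF cv, of t x y] t x y xy by simp
  qed
qed

lemma Eminus: "((-) k has_real_derivative (-1)) (at (y::real))"
  using DERIV_diff[OF DERIV_const DERIV_ident, of k y] by simp



lemma fbase_anti: "f_base g g1 (x, -x) = f_base g g1 (-x, x)"
proof -
  consider "x > 0" | "x < 0" | "x = 0" by linarith
  then show ?thesis
  proof cases
    case 1 then show ?thesis by (simp add: f_base_def Let_def field_simps)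
  next
    case 2 then show ?thesis by (simp add: f_base_def Let_def field_simps)
  qed simp
qed

lemma f_sep_sym: "f_sep g g1 (x, y) = f_sep g g1 (y, x)"
proof -
  consider "\<bar>y\<bar> > \<bar>x\<bar>" | "\<bar>x\<bar> > \<bar>y\<bar>" | "y = x" | "y = -x" by linarith
  then show ?thesis
  proof cases
    case 4 then show ?thesis using fbase_anti[of g g1 x] by (simp add: f_sep_def)
  qed (auto simp: f_sep_def)
qed

context
  fixes c :: real and g g1 g2 g3 :: "real \<Rightarrow> real"
  assumes d1: "\<And>t. t > c \<Longrightarrow> (g has_real_derivative g1 t) (at t)"
      and d2: "\<And>t. t > c \<Longrightarrow> (g1 has_real_derivative g2 t) (at t)"
      and d3: "\<And>t. t > c \<Longrightarrow> (g2 has_real_derivative g3 t) (at t)"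
      and s0: "\<And>t. t > c \<Longrightarrow> g t \<ge> 0"
      and s1: "\<And>t. t > c \<Longrightarrow> g1 t \<le> 0"
      and s2: "\<And>t. t > c \<Longrightarrow> g2 t \<ge> 0"
      and s3: "\<And>t. t > c \<Longrightarrow> g3 t \<le> 0"
begin

lemma lnpos: "0 < y \<Longrightarrow> y < exp (-c) \<Longrightarrow> c < ln (1/y)"
proof -
  assume y: "0 < y" "y < exp (-c)"
  have "ln y < -c" using ln_less_cancel_iff[of y "exp(-c)"] y by simp
  moreover have "ln(1/y) = - ln y" using ln_div[of 1 y] y by simp
  ultimately show ?thesis by simp
qed

lemma lnneg: "y < 0 \<Longrightarrow> - exp (-c) < y \<Longrightarrow> c < ln (-(1/y))"
  using lnpos[of "-y"] by simp

lemma dpos: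
  assumes F: "\<And>t. t > c \<Longrightarrow> (F has_real_derivative F' t) (at t)"
    and y: "0 < y" "y < exp (-c)"
  shows "((\<lambda>y. F (ln (1/y))) has_real_derivative (- F' (ln (1/y)) / y)) (at y)"
  using DERIV_chain2[OF F[OF lnpos[OF y]] dl[OF y(1)]] by simp

lemma dneg:
  assumes F: "\<And>t. t > c \<Longrightarrow> (F has_real_derivative F' t) (at t)"
    and y: "y < 0" "- exp (-c) < y"
  shows "((\<lambda>y. F (ln (-(1/y)))) has_real_derivative (- F' (ln (-(1/y))) / y)) (at y)"
  using DERIV_chain2[OF F[OF lnneg[OF y]] dl2[OF y(1)]] by simp

definition "psi a y = - g (ln (1/y)) * (2*a - y) - g1 (ln (1/y)) * (1/(2*y)) * (y - a) * (2*y - a)"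
definition "psi1 a y = g (ln(1/y)) - g1(ln(1/y))*(y-2*a)/y + g2(ln(1/y))*(y-a)*(2*y-a)/(2*y^2)
   - g1(ln(1/y))*(1 - a^2/(2*y^2))"
definition "psi2 a y = (-2*g1(ln(1/y))*(y+a)^2 + g2(ln(1/y))*(y-a)*(3*a+4*y)
   - g3(ln(1/y))*(y-a)*(2*y-a))/(2*y^3)"

lemma psi_deriv:
  assumes y: "0 < y" "y < exp (-c)"
  shows "(psi a has_real_derivative psi1 a y) (at y)"
proof -
  have D0: "((\<lambda>y. g (ln (1/y))) has_real_derivative (- g1 (ln (1/y)) / y)) (at y)"
    by (rule dpos[OF _ y]) (rule d1)
  have D1: "((\<lambda>y. g1 (ln (1/y))) has_real_derivative (- g2 (ln (1/y)) / y)) (at y)"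
    by (rule dpos[OF _ y]) (rule d2)
  have E1: "((-) (2*a) has_real_derivative (-1)) (at y)" 
    using DERIV_diff[OF DERIV_const DERIV_ident, of "2*a" y] by simp
  have ne: "y \<noteq> 0" "2*y \<noteq> 0" "2*y^2 \<noteq> 0" "y*y \<noteq> 0" "2*y*(2*y) \<noteq> 0" using y by auto
  show ?thesis unfolding psi_def[abs_def] psi1_def
    apply (rule derivative_eq_intros D0 D1 ne E1 | rule refl)+
    using y apply (simp add: field_simps power2_eq_square)
    done
qed

lemma psi1_deriv:
  assumes y: "0 < y" "y < exp (-c)"
  shows "(psi1 a has_real_derivative psi2 a y) (at y)"
proof -
  have D0: "((\<lambda>y. g (ln (1/y))) has_real_derivative (- g1 (ln (1/y)) / y)) (at y)"
    by (rule dpos[OF _ y]) (rule d1)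
  have D1: "((\<lambda>y. g1 (ln (1/y))) has_real_derivative (- g2 (ln (1/y)) / y)) (at y)"
    by (rule dpos[OF _ y]) (rule d2)
  have D2: "((\<lambda>y. g2 (ln (1/y))) has_real_derivative (- g3 (ln (1/y)) / y)) (at y)"
    by (rule dpos[OF _ y]) (rule d3)
  have ne: "y \<noteq> 0" "2*y \<noteq> 0" "2*y^2 \<noteq> 0" "y*y \<noteq> 0" "2*y^2*(2*y^2) \<noteq> 0" "y^2 \<noteq> 0"
    using y by auto
  show ?thesis unfolding psi1_def[abs_def] psi2_def
    apply (rule derivative_eq_intros D0 D1 D2 ne | rule refl)+
    using y apply (simp add: field_simps power2_eq_square power3_eq_cube)
    done
qed

definition "chi a y = - g (ln (-(1/y))) * (2*y - a) - g1 (ln (-(1/y))) * (3/2) * (a - y)"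
definition "chi1 a y = -2*g (ln (-(1/y))) + g1 (ln (-(1/y)))*(2*y-a)/y
   + (3/2)*g2 (ln (-(1/y)))*(a-y)/y + (3/2)*g1 (ln (-(1/y)))"
definition "chi2 a y = (2*g1 (ln (-(1/y)))*(2*y+a) - g2 (ln (-(1/y)))*(7*y+a)
   - 3*g3 (ln (-(1/y)))*(a-y))/(2*y^2)"

lemma chi_deriv:
  assumes y: "y < 0" "- exp (-c) < y"
  shows "(chi a has_real_derivative chi1 a y) (at y)"
proof -
  have D0: "((\<lambda>y. g (ln (-(1/y)))) has_real_derivative (- g1 (ln (-(1/y))) / y)) (at y)"
    by (rule dneg[OF _ y]) (rule d1)
  have D1: "((\<lambda>y. g1 (ln (-(1/y)))) has_real_derivative (- g2 (ln (-(1/y))) / y)) (at y)"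
    by (rule dneg[OF _ y]) (rule d2)
  have E1: "((-) a has_real_derivative (-1)) (at y)" 
    using DERIV_diff[OF DERIV_const DERIV_ident, of "a" y] by simp
  have ne: "y \<noteq> 0" "2*y \<noteq> 0" "y*y \<noteq> 0" using y by auto
  show ?thesis unfolding chi_def[abs_def] chi1_def
    apply (rule derivative_eq_intros D0 D1 ne E1 | rule refl)+
    using y apply (simp add: field_simps power2_eq_square)
    done
qed

lemma chi1_deriv:
  assumes y: "y < 0" "- exp (-c) < y"
  shows "(chi1 a has_real_derivative chi2 a y) (at y)"
proof -
  have D0: "((\<lambda>y. g (ln (-(1/y)))) has_real_derivative (- g1 (ln (-(1/y))) / y)) (at y)"
    by (rule dneg[OF _ y]) (rule d1)
  have D1: "((\<lambda>y. g1 (ln (-(1/y)))) has_real_derivative (- g2 (ln (-(1/y))) / y)) (at y)"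
    by (rule dneg[OF _ y]) (rule d2)
  have D2: "((\<lambda>y. g2 (ln (-(1/y)))) has_real_derivative (- g3 (ln (-(1/y))) / y)) (at y)"
    by (rule dneg[OF _ y]) (rule d3)
  have ne: "y \<noteq> 0" "2*y \<noteq> 0" "y*y \<noteq> 0" using y by auto
  show ?thesis unfolding chi1_def[abs_def] chi2_def
    apply (rule derivative_eq_intros D0 D1 D2 ne | rule refl)+
    using y apply (simp add: field_simps power2_eq_square)
    done
qed

lemma psi2_nonneg:
  assumes y: "0 < y" "y < exp (-c)" "\<bar>a\<bar> \<le> y"
  shows "0 \<le> psi2 a y"
proof -
  have L: "c < ln (1/y)" using lnpos y by simp
  have "0 \<le> -2*g1(ln(1/y))*(y+a)^2" using s1[OF L] by (simp add: mult_nonpos_nonneg)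
  moreover have "0 \<le> g2(ln(1/y))*(y-a)*(3*a+4*y)" using s2[OF L] y by simp
  moreover have "0 \<le> - g3(ln(1/y))*((y-a)*(2*y-a))" using s3[OF L] y
    by (intro mult_nonneg_nonneg) auto
  hence "0 \<le> - g3(ln(1/y))*(y-a)*(2*y-a)" by (simp add: mult.assoc)
  ultimately show ?thesis unfolding psi2_def using y by (intro divide_nonneg_pos) auto
qed

lemma chi2_nonneg:
  assumes y: "y < 0" "- exp (-c) < y" "y \<le> - \<bar>a\<bar>"
  shows "0 \<le> chi2 a y"
proof -
  have L: "c < ln (-(1/y))" using lnneg y by simp
  have "0 \<le> 2*g1 (ln (-(1/y)))*(2*y+a)" using s1[OF L] y by (simp add: mult_nonpos_nonpos)
  moreover have "0 \<le> - g2 (ln (-(1/y)))*(7*y+a)" using s2[OF L] y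
    by (simp add: mult_nonneg_nonpos)
  moreover have "0 \<le> (- g3 (ln (-(1/y))))*(a-y)" using s3[OF L] y
    by (intro mult_nonneg_nonneg) auto
  ultimately have "0 \<le> 2*g1 (ln (-(1/y)))*(2*y+a) - g2 (ln (-(1/y)))*(7*y+a)
   - 3*g3 (ln (-(1/y)))*(a-y)" by (simp add: algebra_simps)
  then show ?thesis unfolding chi2_def using y by (intro divide_nonneg_pos) auto
qed

lemma psi_convex:
  assumes S: "connected S" "S \<subseteq> {y. \<bar>a\<bar> \<le> y \<and> 0 < y \<and> y < exp (-c)}"
  shows "convex_on S (psi a)"
proof (rule convex_on_realI[OF S(1)])
  show "\<And>x. x \<in> S \<Longrightarrow> (psi a has_real_derivative psi1 a x) (at x)"
    using S psi_deriv by blast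
  fix x z assume xz: "x \<in> S" "z \<in> S" "x \<le> z"
  have "{x..z} \<subseteq> S" using connected_contains_Icc[OF S(1) xz(1,2)] .
  then show "psi1 a x \<le> psi1 a z"
    using S(2) xz(3)
    by (intro DERIV_nonneg_imp_nondecreasing[OF xz(3)])
       (force intro!: psi1_deriv psi2_nonneg)
qed

lemma chi_convex:
  assumes S: "connected S" "S \<subseteq> {y. y \<le> - \<bar>a\<bar> \<and> y < 0 \<and> - exp (-c) < y}"
  shows "convex_on S (chi a)"
proof (rule convex_on_realI[OF S(1)])
  show "\<And>x. x \<in> S \<Longrightarrow> (chi a has_real_derivative chi1 a x) (at x)"
    using S chi_deriv by blast
  fix x z assume xz: "x \<in> S" "z \<in> S" "x \<le> z"
  have "{x..z} \<subseteq> S" using connected_contains_Icc[OF S(1) xz(1,2)] .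
  then show "chi1 a x \<le> chi1 a z"
    using S(2) xz(3)
    by (intro DERIV_nonneg_imp_nondecreasing[OF xz(3)])
       (force intro!: chi1_deriv chi2_nonneg)
qed

lemma g_anti: assumes "c < s" "s \<le> t" shows "g t \<le> g s"
proof (rule DERIV_nonpos_imp_nonincreasing[where f=g, OF assms(2)])
  fix x assume "s \<le> x" "x \<le> t" hence "c < x" using assms by linarith
  thus "\<exists>y. DERIV g x :> y \<and> y \<le> 0" using d1 s1 by blast
qed

lemma g1_mono: assumes "c < s" "s \<le> t" shows "g1 s \<le> g1 t"
proof (rule DERIV_nonneg_imp_nondecreasing[where f=g1, OF assms(2)])
  fix x assume "s \<le> x" "x \<le> t" hence "c < x" using assms by linarith
  thus "\<exists>y. DERIV g1 x :> y \<and> 0 \<le> y" using d2 s2 by blast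
qed

definition "Mf a y = (if a > 0 then -g(ln(1/a))*(2*y - a) - g1(ln(1/a))*(1/(2*a))*(a-y)*(2*a-y)
   else -g(ln(-(1/a)))*(2*a - y) - g1(ln(-(1/a)))*(3/2)*(y - a))"
definition "Mf1 a y = (if a > 0 then -2*g(ln(1/a)) + g1(ln(1/a))*(3*a - 2*y)/(2*a)
   else g(ln(-(1/a))) - (3/2)*g1(ln(-(1/a))))"

lemma Mf_deriv: "a \<noteq> 0 \<Longrightarrow> (Mf a has_real_derivative Mf1 a y) (at y)"
proof (cases "a > 0")
  case True
  have ne: "a \<noteq> 0" "2*a \<noteq> 0" using True by auto
  show ?thesis unfolding Mf_def[abs_def] Mf1_def using True
    apply simp
    apply (rule derivative_eq_intros Eminus ne | rule refl)+
    using True apply (simp add: field_simps)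
    done
next
  case False
  assume "a \<noteq> 0"
  have two: "(2::real) \<noteq> 0" "(2::real)*2 \<noteq> 0" by auto
  show ?thesis unfolding Mf_def[abs_def] Mf1_def using False
    apply simp
    apply (rule derivative_eq_intros Eminus two | rule refl)+
    apply (simp add: field_simps)
    done
qed

lemma Mf_convex:
  assumes a: "a \<noteq> 0" "\<bar>a\<bar> < exp (-c)"
  shows "convex_on UNIV (Mf a)"
proof (rule convex_on_realI)
  show "\<And>x. x \<in> UNIV \<Longrightarrow> (Mf a has_real_derivative Mf1 a x) (at x)"
    using Mf_deriv a by blast
  fix x z :: real assume xz: "x \<le> z"
  show "Mf1 a x \<le> Mf1 a z"
  proof (cases "a > 0")
    case True
    have L: "c < ln (1/a)" using lnpos a True by simp
    have "g1(ln(1/a))*(3*a - 2*x) \<le> g1(ln(1/a))*(3*a - 2*z)"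
      using s1[OF L] xz by (intro mult_left_mono_neg) auto
    then show ?thesis unfolding Mf1_def using True by (simp add: divide_right_mono)
  next
    case False
    then show ?thesis unfolding Mf1_def by simp
  qed
qed simp

lemma hR: "\<bar>a\<bar> < y \<Longrightarrow> f_sep g g1 (a, y) = psi a y"
  by (simp add: f_sep_def f_base_def psi_def Let_def)

lemma hL: "y < - \<bar>a\<bar> \<Longrightarrow> f_sep g g1 (a, y) = chi a y"
proof -
  assume y: "y < - \<bar>a\<bar>"
  hence "y < 0" "\<not> \<bar>a\<bar> \<le> y" "\<bar>a\<bar> < \<bar>y\<bar>" "y \<le> - \<bar>a\<bar>" by auto
  thus ?thesis by (simp add: f_sep_def f_base_def chi_def Let_def)
qed

lemma hM: "a \<noteq> 0 \<Longrightarrow> \<bar>y\<bar> \<le> \<bar>a\<bar> \<Longrightarrow> f_sep g g1 (a, y) = Mf a y"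
  by (cases "a > 0") (auto simp: f_sep_def f_base_def Mf_def Let_def)

lemma hRe: "a \<noteq> 0 \<Longrightarrow> f_sep g g1 (a, \<bar>a\<bar>) = psi a \<bar>a\<bar>"
  by (cases "a > 0") (auto simp: f_sep_def f_base_def psi_def Let_def field_simps)

lemma hLe: "a \<noteq> 0 \<Longrightarrow> f_sep g g1 (a, - \<bar>a\<bar>) = chi a (- \<bar>a\<bar>)"
  by (cases "a > 0") (auto simp: f_sep_def f_base_def chi_def Let_def field_simps)

lemma hRge: "a \<noteq> 0 \<Longrightarrow> \<bar>a\<bar> \<le> y \<Longrightarrow> f_sep g g1 (a, y) = psi a y"
  using hR hRe by (cases "y = \<bar>a\<bar>") auto

lemma hLle: "a \<noteq> 0 \<Longrightarrow> y \<le> - \<bar>a\<bar> \<Longrightarrow> f_sep g g1 (a, y) = chi a y"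
  using hL hLe by (cases "y = - \<bar>a\<bar>") auto

lemma J1: assumes "a \<noteq> 0" "\<bar>a\<bar> < exp (-c)" shows "chi1 a (- \<bar>a\<bar>) \<le> Mf1 a (- \<bar>a\<bar>)"
proof (cases "a > 0")
  case True
  have L: "c < ln (1/a)" using lnpos assms True by simp
  have e1: "chi1 a (-a) = -2*g(ln(1/a)) + 9/2*g1(ln(1/a)) - 3*g2(ln(1/a))"
    using True by (simp add: chi1_def field_simps)
  have e2: "Mf1 a (-a) = -2*g(ln(1/a)) + 5/2*g1(ln(1/a))"
    using True by (simp add: Mf1_def field_simps)
  show ?thesis using True e1 e2 s1[OF L] s2[OF L] by simp
next
  case False
  hence a: "a < 0" using assms by simp
  have L: "c < ln (-(1/a))" using lnneg assms a by simp
  have e1: "chi1 a a = -2*g(ln(-(1/a))) + 5/2*g1(ln(-(1/a)))"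
    using a by (simp add: chi1_def field_simps)
  have e2: "Mf1 a a = g(ln(-(1/a))) - 3/2*g1(ln(-(1/a)))"
    using a by (simp add: Mf1_def field_simps)
  show ?thesis using a e1 e2 s0[OF L] s1[OF L] by simp
qed

lemma J2: assumes "a \<noteq> 0" "\<bar>a\<bar> < exp (-c)" shows "Mf1 a \<bar>a\<bar> \<le> psi1 a \<bar>a\<bar>"
proof (cases "a > 0")
  case True
  have L: "c < ln (1/a)" using lnpos assms True by simp
  have e1: "psi1 a a = g(ln(1/a)) + 1/2*g1(ln(1/a))"
    using True by (simp add: psi1_def field_simps power2_eq_square)
  have e2: "Mf1 a a = -2*g(ln(1/a)) + 1/2*g1(ln(1/a))"
    using True by (simp add: Mf1_def field_simps)
  show ?thesis using True e1 e2 s0[OF L] by simp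
next
  case False
  hence a: "a < 0" using assms by simp
  have L: "c < ln (-(1/a))" using lnneg assms a by simp
  have e1: "psi1 a (-a) = g(ln(-(1/a))) - 7/2*g1(ln(-(1/a))) + 3*g2(ln(-(1/a)))"
    using a by (simp add: psi1_def field_simps power2_eq_square)
  have e2: "Mf1 a (-a) = g(ln(-(1/a))) - 3/2*g1(ln(-(1/a)))"
    using a by (simp add: Mf1_def field_simps)
  show ?thesis using a e1 e2 s1[OF L] s2[OF L] by simp
qed

lemma line_convex_nz:
  assumes a0: "a \<noteq> 0" and aE: "\<bar>a\<bar> < exp (-c)"
  shows "convex_on {-exp(-c)<..<exp(-c)} (\<lambda>y. f_sep g g1 (a, y))"
proof -
  define E where "E = exp (-c)"
  define b where "b = \<bar>a\<bar>"
  define h where "h = (\<lambda>y. f_sep g g1 (a, y))"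
  have b0: "0 < b" and bE: "b < E" using a0 aE by (auto simp: b_def E_def)
  have cvL: "convex_on {-E<..-b} h"
  proof (rule convex_on_cong'[OF chi_convex[of "{-E<..-b}" a]])
    show "connected {-E<..-b}" by (intro convex_connected) simp
    show "{-E<..-b} \<subseteq> {y. y \<le> - \<bar>a\<bar> \<and> y < 0 \<and> - exp (-c) < y}" using b0 by (auto simp: b_def E_def)
    show "\<And>x. x \<in> {-E<..-b} \<Longrightarrow> chi a x = h x" using hLle[OF a0] by (auto simp: h_def b_def)
  qed
  have cvM: "convex_on {-b..b} h"
  proof (rule convex_on_cong'[OF convex_on_subset[OF Mf_convex[OF a0 aE]]])
    show "\<And>x. x \<in> {-b..b} \<Longrightarrow> Mf a x = h x" using hM[OF a0] by (auto simp: h_def b_def)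
  qed auto
  have cvR: "convex_on {b..<E} h"
  proof (rule convex_on_cong'[OF psi_convex[of "{b..<E}" a]])
    show "connected {b..<E}" by (intro convex_connected) simp
    show "{b..<E} \<subseteq> {y. \<bar>a\<bar> \<le> y \<and> 0 < y \<and> y < exp (-c)}" using b0 by (auto simp: b_def E_def)
    show "\<And>x. x \<in> {b..<E} \<Longrightarrow> psi a x = h x" using hRge[OF a0] by (auto simp: h_def b_def)
  qed
  have cv1: "convex_on {-E<..b} h"
  proof (rule glue_deriv[where q="-b"])
    show "convex {-E<..b}" by simp
    show "-b \<in> {-E<..b}" using b0 bE by auto
    have "{-E<..b} \<inter> {..-b} = {-E<..-b}" using b0 by auto
    then show "convex_on ({-E<..b} \<inter> {..-b}) h" using cvL by simp
    have "{-E<..b} \<inter> {-b..} = {-b..b}" using bE by auto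
    then show "convex_on ({-E<..b} \<inter> {-b..}) h" using cvM by simp
    show "(h has_real_derivative chi1 a (-b)) (at (-b) within {-E<..b} \<inter> {..-b})"
    proof (rule has_field_derivative_transform_within[where d=1])
      show "(chi a has_real_derivative chi1 a (-b)) (at (-b) within {-E<..b} \<inter> {..-b})"
        using chi_deriv[of "-b" a] b0 bE by (auto simp: E_def intro: has_field_derivative_at_within)
      show "- b \<in> {-E<..b} \<inter> {..-b}" using b0 bE by auto
      show "\<And>x. x \<in> {-E<..b} \<inter> {..-b} \<Longrightarrow> dist x (-b) < 1 \<Longrightarrow> chi a x = h x"
        using hLle[OF a0] by (auto simp: h_def b_def)
    qed simp
    show "(h has_real_derivative Mf1 a (-b)) (at (-b) within {-E<..b} \<inter> {-b..})"
    proof (rule has_field_derivative_transform_within[where d=1])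
      show "(Mf a has_real_derivative Mf1 a (-b)) (at (-b) within {-E<..b} \<inter> {-b..})"
        using Mf_deriv[OF a0] by (auto intro: has_field_derivative_at_within)
      show "- b \<in> {-E<..b} \<inter> {-b..}" using b0 bE by auto
      show "\<And>x. x \<in> {-E<..b} \<inter> {-b..} \<Longrightarrow> dist x (-b) < 1 \<Longrightarrow> Mf a x = h x"
        using hM[OF a0] by (auto simp: h_def b_def)
    qed simp
    show "chi1 a (- b) \<le> Mf1 a (- b)" using J1[OF a0 aE] by (simp add: b_def)
  qed
  have "convex_on {-E<..<E} h"
  proof (rule glue_deriv[where q="b"])
    show "convex {-E<..<E}" by simp
    show "b \<in> {-E<..<E}" using b0 bE by auto
    have "{-E<..<E} \<inter> {..b} = {-E<..b}" using bE by auto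
    then show "convex_on ({-E<..<E} \<inter> {..b}) h" using cv1 by simp
    have "{-E<..<E} \<inter> {b..} = {b..<E}" using b0 bE by auto
    then show "convex_on ({-E<..<E} \<inter> {b..}) h" using cvR by simp
    show "(h has_real_derivative Mf1 a b) (at b within {-E<..<E} \<inter> {..b})"
    proof (rule has_field_derivative_transform_within[where d="2*b"])
      show "(Mf a has_real_derivative Mf1 a b) (at b within {-E<..<E} \<inter> {..b})"
        using Mf_deriv[OF a0] by (auto intro: has_field_derivative_at_within)
      show "b \<in> {-E<..<E} \<inter> {..b}" using b0 bE by auto
      show "\<And>x. x \<in> {-E<..<E} \<inter> {..b} \<Longrightarrow> dist x b < 2*b \<Longrightarrow> Mf a x = h x"
        using hM[OF a0] by (auto simp: h_def b_def dist_real_def)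
    qed (use b0 in simp)
    show "(h has_real_derivative psi1 a b) (at b within {-E<..<E} \<inter> {b..})"
    proof (rule has_field_derivative_transform_within[where d=1])
      show "(psi a has_real_derivative psi1 a b) (at b within {-E<..<E} \<inter> {b..})"
        using psi_deriv[of b a] b0 bE by (auto simp: E_def intro: has_field_derivative_at_within)
      show "b \<in> {-E<..<E} \<inter> {b..}" using b0 bE by auto
      show "\<And>x. x \<in> {-E<..<E} \<inter> {b..} \<Longrightarrow> dist x b < 1 \<Longrightarrow> psi a x = h x"
        using hRge[OF a0] by (auto simp: h_def b_def)
    qed simp
    show "Mf1 a b \<le> psi1 a b" using J2[OF a0 aE] by (simp add: b_def)
  qed
  then show ?thesis by (simp add: h_def E_def)
qed

lemma psi0: "y \<noteq> 0 \<Longrightarrow> psi 0 y = y * (g (ln (1/y)) - g1 (ln (1/y)))"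
  by (simp add: psi_def field_simps)

lemma chi0: "chi 0 y = (-y) * (2 * g (ln (-(1/y))) - 3/2 * g1 (ln (-(1/y))))"
  by (simp add: chi_def field_simps)

lemma line_convex_0:
  shows "convex_on {-exp(-c)<..<exp(-c)} (\<lambda>y. f_sep g g1 (0, y))"
proof -
  define E where "E = exp (-c)"
  define h where "h = (\<lambda>y. f_sep g g1 (0, y))"
  have E0: "0 < E" by (simp add: E_def)
  have h0: "h 0 = 0" by (simp add: h_def f_sep_def f_base_def)
  have hp: "\<And>y. 0 < y \<Longrightarrow> h y = psi 0 y" using hR[of 0] by (simp add: h_def)
  have hn: "\<And>y. y < 0 \<Longrightarrow> h y = chi 0 y" using hL[of _ 0] by (simp add: h_def)
  have cvR: "convex_on {0..<E} h"
  proof (rule ratio_right[where h=h and r=E, OF _ h0])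
    show "convex_on {0<..<E} h"
    proof (rule convex_on_cong'[OF psi_convex[of "{0<..<E}" 0]])
      show "connected {0<..<E}" by (intro convex_connected) simp
      show "{0<..<E} \<subseteq> {y. \<bar>0\<bar> \<le> y \<and> 0 < y \<and> y < exp (-c)}" by (auto simp: E_def)
      show "\<And>x. x \<in> {0<..<E} \<Longrightarrow> psi 0 x = h x" using hp by auto
    qed
    fix z t :: real assume z: "0 < z" "z < E" and t: "0 < t" "t < 1"
    have tz: "0 < t*z" "t*z \<le> z" using z t by (auto simp: mult_left_le_one_le)
    have Lz: "c < ln (1/z)" using lnpos z by (simp add: E_def)
    have Le: "ln (1/z) \<le> ln (1/(t*z))" using tz z by (simp add: divide_left_mono)
    have "g (ln (1/(t*z))) - g1 (ln (1/(t*z))) \<le> g (ln (1/z)) - g1 (ln (1/z))"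
      using g_anti[OF Lz Le] g1_mono[OF Lz Le] by linarith
    hence "(t*z) * (g (ln (1/(t*z))) - g1 (ln (1/(t*z)))) \<le> (t*z) * (g (ln (1/z)) - g1 (ln (1/z)))"
      using tz by (intro mult_left_mono) auto
    then show "h (t*z) \<le> t * h z" using hp[OF tz(1)] hp[OF z(1)] psi0[of "t*z"] psi0[of z] tz z t by (simp add: mult.assoc)
  qed
  have cvL: "convex_on {-E<..0} h"
  proof (rule ratio_left[where h=h and r=E, OF _ h0])
    show "convex_on {-E<..<0} h"
    proof (rule convex_on_cong'[OF chi_convex[of "{-E<..<0}" 0]])
      show "connected {-E<..<0}" by (intro convex_connected) simp
      show "{-E<..<0} \<subseteq> {y. y \<le> - \<bar>0\<bar> \<and> y < 0 \<and> - exp (-c) < y}" by (auto simp: E_def)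
      show "\<And>x. x \<in> {-E<..<0} \<Longrightarrow> chi 0 x = h x" using hn by auto
    qed
    fix z t :: real assume z: "-E < z" "z < 0" and t: "0 < t" "t < 1"
    have tz1: "t*z < 0" using z t by (simp add: mult_pos_neg)
    have "(1-t)*z \<le> 0" using z t by (intro mult_nonneg_nonpos) auto
    hence tz2: "z \<le> t*z" by (simp add: algebra_simps)
    note tz = tz1 tz2
    have Lz: "c < ln (-(1/z))" using lnneg z by (simp add: E_def)
    have Le: "ln (-(1/z)) \<le> ln (-(1/(t*z)))"
    proof -
      have p: "0 < z*(t*z)" using z tz by (simp add: mult_neg_neg)
      have "1/(-z) \<le> 1/(-(t*z))" using tz z p by (intro divide_left_mono) auto
      hence "-(1/z) \<le> -(1/(t*z))" by simp
      moreover have "0 < -(1/z)" using z by simp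
      ultimately show ?thesis using tz by (subst ln_le_cancel_iff) auto
    qed
    have "2 * g (ln (-(1/(t*z)))) - 3/2 * g1 (ln (-(1/(t*z)))) \<le> 2 * g (ln (-(1/z))) - 3/2 * g1 (ln (-(1/z)))"
      using g_anti[OF Lz Le] g1_mono[OF Lz Le] by linarith
    hence "(-(t*z)) * (2 * g (ln (-(1/(t*z)))) - 3/2 * g1 (ln (-(1/(t*z))))) \<le> (-(t*z)) * (2 * g (ln (-(1/z))) - 3/2 * g1 (ln (-(1/z))))"
      using tz by (intro mult_left_mono) auto
    then show "h (t*z) \<le> t * h z" using hn[OF tz(1)] hn[OF z(2)] chi0 by simp
  qed
  have "convex_on {-E<..<E} h"
  proof (rule glue_sub[where q=0 and m=0])
    show "convex {-E<..<E}" by simp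
    show "0 \<in> {-E<..<E}" using E0 by auto
    have "{-E<..<E} \<inter> {..0} = {-E<..0}" using E0 by auto
    then show "convex_on ({-E<..<E} \<inter> {..0}) h" using cvL by simp
    have "{-E<..<E} \<inter> {0..} = {0..<E}" using E0 by auto
    then show "convex_on ({-E<..<E} \<inter> {0..}) h" using cvR by simp
    fix x assume x: "x \<in> {-E<..<E}"
    consider "x = 0" | "0 < x" | "x < 0" by linarith
    then show "h 0 + 0 * (x - 0) \<le> h x"
    proof cases
      case 2
      have L: "c < ln (1/x)" using lnpos 2 x by (simp add: E_def)
      show ?thesis using hp[OF 2] psi0 2 s0[OF L] s1[OF L] h0 by simp
    next
      case 3
      have L: "c < ln (-(1/x))" using lnneg 3 x by (simp add: E_def)
      have "0 \<le> (-x) * (2 * g (ln (-(1/x))) - 3/2 * g1 (ln (-(1/x))))"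
        using 3 s0[OF L] s1[OF L] by (intro mult_nonneg_nonneg) auto
      then show ?thesis using hn[OF 3] chi0 h0 by simp
    qed (simp add: h0)
  qed
  then show ?thesis by (simp add: h_def E_def)
qed

lemma line_convex:
  assumes "\<bar>a\<bar> < exp (-c)"
  shows "convex_on {-exp(-c)<..<exp(-c)} (\<lambda>y. f_sep g g1 (a, y))"
  using line_convex_nz[OF _ assms] line_convex_0 by (cases "a = 0") auto

lemma main_ctx:
  "separately_convex_on ({-exp (-c)<..<exp (-c)} \<times> {-exp (-c)<..<exp (-c)}) (f_sep g g1)"
  unfolding separately_convex_on_def
proof (intro allI impI, elim conjE)
  fix a b :: "real \<times> real"
  define E where "E = exp (-c)"
  assume sub: "closed_segment a b \<subseteq> {-exp (-c)<..<exp (-c)} \<times> {-exp (-c)<..<exp (-c)}"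
    and ax: "fst a = fst b \<or> snd a = snd b"
  have aU: "a \<in> {-E<..<E} \<times> {-E<..<E}" using sub ends_in_segment(1)[of a b] by (auto simp: E_def)
  have segU: "\<And>p. p \<in> closed_segment a b \<Longrightarrow> p \<in> {-E<..<E} \<times> {-E<..<E}" using sub by (auto simp: E_def)
  from ax show "convex_on (closed_segment a b) (f_sep g g1)"
  proof
    assume fa: "fst a = fst b"
    have fp: "fst p = fst a" if pin: "p \<in> closed_segment a b" for p
    proof -
      obtain u where "p = (1-u) *\<^sub>R a + u *\<^sub>R b" using pin unfolding closed_segment_def by blast
      then have "fst p = (1-u) * fst a + u * fst b" by simp
      then show ?thesis using fa by (simp add: algebra_simps)
    qed
    have lc: "convex_on {-E<..<E} (\<lambda>y. f_sep g g1 (fst a, y))"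
      using line_convex[of "fst a"] aU by (auto simp: E_def)
    show ?thesis
    proof (rule convex_onI)
      show "convex (closed_segment a b)" by simp
      fix t :: real and x y assume t: "0 < t" "t < 1" and x: "x \<in> closed_segment a b" and y: "y \<in> closed_segment a b"
      have ex: "x = (fst a, snd x)" "y = (fst a, snd y)" using fp[OF x] fp[OF y] by (metis prod.collapse)+
      have sx: "snd x \<in> {-E<..<E}" "snd y \<in> {-E<..<E}" using segU[OF x] segU[OF y] by auto
      have "f_sep g g1 (fst a, (1-t) * snd x + t * snd y) \<le> (1-t) * f_sep g g1 (fst a, snd x) + t * f_sep g g1 (fst a, snd y)"
        using convex_onD[OF lc, of t "snd x" "snd y"] t sx by simp
      moreover have "(1 - t) *\<^sub>R x + t *\<^sub>R y = (fst a, (1-t) * snd x + t * snd y)"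
        by (subst ex(1), subst ex(2)) (simp add: algebra_simps)
      ultimately show "f_sep g g1 ((1 - t) *\<^sub>R x + t *\<^sub>R y) \<le> (1 - t) * f_sep g g1 x + t * f_sep g g1 y"
        using ex by (metis)
    qed
  next
    assume fa: "snd a = snd b"
    have fp: "snd p = snd a" if pin: "p \<in> closed_segment a b" for p
    proof -
      obtain u where "p = (1-u) *\<^sub>R a + u *\<^sub>R b" using pin unfolding closed_segment_def by blast
      then have "snd p = (1-u) * snd a + u * snd b" by simp
      then show ?thesis using fa by (simp add: algebra_simps)
    qed
    have lc: "convex_on {-E<..<E} (\<lambda>y. f_sep g g1 (snd a, y))"
      using line_convex[of "snd a"] aU by (auto simp: E_def)
    show ?thesis
    proof (rule convex_onI)
      show "convex (closed_segment a b)" by simp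
      fix t :: real and x y assume t: "0 < t" "t < 1" and x: "x \<in> closed_segment a b" and y: "y \<in> closed_segment a b"
      have ex: "x = (fst x, snd a)" "y = (fst y, snd a)" using fp[OF x] fp[OF y] by (metis prod.collapse)+
      have sx: "fst x \<in> {-E<..<E}" "fst y \<in> {-E<..<E}" using segU[OF x] segU[OF y] by auto
      have "f_sep g g1 (snd a, (1-t) * fst x + t * fst y) \<le> (1-t) * f_sep g g1 (snd a, fst x) + t * f_sep g g1 (snd a, fst y)"
        using convex_onD[OF lc, of t "fst x" "fst y"] t sx by simp
      moreover have "(1 - t) *\<^sub>R x + t *\<^sub>R y = ((1-t) * fst x + t * fst y, snd a)"
        by (subst ex(1), subst ex(2)) (simp add: algebra_simps)
      ultimately show "f_sep g g1 ((1 - t) *\<^sub>R x + t *\<^sub>R y) \<le> (1 - t) * f_sep g g1 x + t * f_sep g g1 y"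
        using ex f_sep_sym by (metis)
    qed
  qed
qed

end

theorem proposition8p1:
  fixes c :: real and g g1 g2 g3 :: "real \<Rightarrow> real"
  assumes d1: "\<And>t. t > c \<Longrightarrow> (g has_real_derivative g1 t) (at t)"
      and d2: "\<And>t. t > c \<Longrightarrow> (g1 has_real_derivative g2 t) (at t)"
      and d3: "\<And>t. t > c \<Longrightarrow> (g2 has_real_derivative g3 t) (at t)"
      and s0: "\<And>t. t > c \<Longrightarrow> g t \<ge> 0"
      and s1: "\<And>t. t > c \<Longrightarrow> g1 t \<le> 0"
      and s2: "\<And>t. t > c \<Longrightarrow> g2 t \<ge> 0"
      and s3: "\<And>t. t > c \<Longrightarrow> g3 t \<le> 0"
  shows "separately_convex_on ({-exp (-c)<..<exp (-c)} \<times> {-exp (-c)<..<exp (-c)}) (f_sep g g1)"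
    by (rule main_ctx[OF d1 d2 d3 s0 s1 s2 s3])

end
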